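(* Let $|\psi\rangle=\alpha|0\rangle+\beta|1\rangle$ be a pure qubit state and let $R=-|\alpha|^2\log_2|\alpha|^2-|\beta|^2\log_2|\beta|^2=R_I(|\psi\rangle)$. For every $\varepsilon>0$ there is $n_0$ such that for all $n\ge n_0$ there exists an incoherent operation on $(\mathbb C^2)^{\otimes n}$ with respect to the product computational basis, with Kraus operators $\{K_j\}$, such that for each outcome $j$ with $p_j=\|K_j|\psi\rangle^{\otimes n}\|^2>0$ the normalized post-measurement state $K_j|\psi\rangle^{\otimes n}/\sqrt{p_j}$ is, up to an incoherent relabeling of basis states (equivalently, a permutation of computational basis vectors), the state $|\Psi_2\rangle^{\otimes r_j}\otimes|0\cdots0\rangle$ for some integer $r_j\ge0$, where $|\Psi_2\rangle=(|0\rangle+|1\rangle)/\sqrt2$, and the expected number of distilled copies satisfies $\sum_jp_jr_j\ge n(R-\varepsilon)$.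
   Context: An incoherent operation with respect to an orthonormal basis $\{|i\rangle\}$ is a CPTP map $\Phi(\rho)=\sum_jK_j\rho K_j^\dagger$ with $\sum_jK_j^\dagger K_j=\mathbb 1$ such that $K_j\delta K_j^\dagger$ is diagonal in that basis whenever $\delta$ is diagonal in that basis. On $(\mathbb C^2)^{\otimes n}$ the basis is the product computational basis $\{|x_1\cdots x_n\rangle: x_k\in\{0,1\}\}$. For a pure state $|\phi\rangle=\sum_ia_i|i\rangle$, $R_I(|\phi\rangle)=-\sum_i|a_i|^2\log_2|a_i|^2$. *)

theory Defs
  imports "HOL-Analysis.Analysis" "HOL-Combinatorics.Permutations"
begin

text \<open>The n-qubit space is C^(2^n); the product computational basis
vector |x_1 ... x_n> is encoded by the natural number x < 2^n whose k-th binary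
digit (k < n) is the value of qubit k. Vectors are functions nat => complex
(only indices below the dimension matter); operators on C^N are functions
nat => nat => complex (row, column), indices below N. A finite family of
Kraus operators is K :: nat => (nat => nat => complex) indexed by j < m.\<close>

definition qbit :: "nat \<Rightarrow> nat \<Rightarrow> bool" where
  "qbit x k \<longleftrightarrow> odd (x div 2 ^ k)"

definition op_apply :: "nat \<Rightarrow> (nat \<Rightarrow> nat \<Rightarrow> complex) \<Rightarrow> (nat \<Rightarrow> complex) \<Rightarrow> (nat \<Rightarrow> complex)" where
  "op_apply N A v = (\<lambda>a. \<Sum>c<N. A a c * v c)"

definition sq_norm :: "nat \<Rightarrow> (nat \<Rightarrow> complex) \<Rightarrow> real" where
  "sq_norm N v = (\<Sum>a<N. (cmod (v a))\<^sup>2)"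

definition is_diag :: "nat \<Rightarrow> (nat \<Rightarrow> nat \<Rightarrow> complex) \<Rightarrow> bool" where
  "is_diag N D \<longleftrightarrow> (\<forall>a<N. \<forall>b<N. a \<noteq> b \<longrightarrow> D a b = 0)"

definition conj_by :: "nat \<Rightarrow> (nat \<Rightarrow> nat \<Rightarrow> complex) \<Rightarrow> (nat \<Rightarrow> nat \<Rightarrow> complex) \<Rightarrow> (nat \<Rightarrow> nat \<Rightarrow> complex)" where
  "conj_by N K D = (\<lambda>a b. \<Sum>c<N. \<Sum>e<N. K a c * D c e * cnj (K b e))"

definition kraus_complete :: "nat \<Rightarrow> nat \<Rightarrow> (nat \<Rightarrow> nat \<Rightarrow> nat \<Rightarrow> complex) \<Rightarrow> bool" where
  "kraus_complete N m K \<longleftrightarrow>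
     (\<forall>a<N. \<forall>b<N. (\<Sum>j<m. \<Sum>i<N. cnj (K j i a) * K j i b) = (if a = b then 1 else 0))"

definition incoherent_op :: "nat \<Rightarrow> nat \<Rightarrow> (nat \<Rightarrow> nat \<Rightarrow> nat \<Rightarrow> complex) \<Rightarrow> bool" where
  "incoherent_op N m K \<longleftrightarrow> kraus_complete N m K \<and>
     (\<forall>j<m. \<forall>D. is_diag N D \<longrightarrow> is_diag N (conj_by N (K j) D))"

definition prod_state :: "nat \<Rightarrow> complex \<Rightarrow> complex \<Rightarrow> (nat \<Rightarrow> complex)" where
  "prod_state n \<alpha> \<beta> = (\<lambda>x. \<Prod>k<n. if qbit x k then \<beta> else \<alpha>)"

text \<open>|Psi_2>^{tensor r} (on qubits 0..r-1) tensor |0...0> (on qubits r..n-1),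
as a vector of C^(2^n) (assuming r \<le> n).\<close>
definition maxcoh_padded :: "nat \<Rightarrow> (nat \<Rightarrow> complex)" where
  "maxcoh_padded r = (\<lambda>y. if y < 2 ^ r then complex_of_real ((1 / sqrt 2) ^ r) else 0)"

definition R_I :: "nat \<Rightarrow> (nat \<Rightarrow> complex) \<Rightarrow> real" where
  "R_I N a = - (\<Sum>i<N. if a i = 0 then 0 else (cmod (a i))\<^sup>2 * log 2 ((cmod (a i))\<^sup>2))"

definition qubit_vec :: "complex \<Rightarrow> complex \<Rightarrow> (nat \<Rightarrow> complex)" where
  "qubit_vec \<alpha> \<beta> = (\<lambda>i. if i = 0 then \<alpha> else \<beta>)"

end

theory Submission
  imports Defs "HOL-Library.Nat_Bijection" "HOL-Real_Asymp.Real_Asymp"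
begin

lemma extend_perm:
  fixes f :: "nat \<Rightarrow> nat"
  assumes "bij_betw f {..<s} B" "B \<subseteq> {..<N}" "s \<le> N"
  shows "\<exists>\<sigma>. \<sigma> permutes {..<N} \<and> (\<forall>y<s. \<sigma> y = f y)"
proof -
  have cB: "card B = s" using assms(1) bij_betw_same_card by fastforce
  have "card ({..<N} - {..<s}) = card ({..<N} - B)"
    using assms cB by (simp add: card_Diff_subset finite_subset)
  then obtain g where g: "bij_betw g ({..<N} - {..<s}) ({..<N} - B)"
    by (meson finite_Diff finite_lessThan finite_same_card_bij)
  define \<sigma> where "\<sigma> y = (if y < s then f y else if y < N then g y else y)" for y
  have b1: "bij_betw \<sigma> {..<s} B"
    using assms(1) by (rule bij_betw_cong[THEN iffD1, rotated]) (simp add: \<sigma>_def)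
  have b2: "bij_betw \<sigma> ({..<N} - {..<s}) ({..<N} - B)"
    using g by (rule bij_betw_cong[THEN iffD1, rotated]) (simp add: \<sigma>_def)
  have "bij_betw \<sigma> ({..<s} \<union> ({..<N} - {..<s})) (B \<union> ({..<N} - B))"
    by (rule bij_betw_combine[OF b1 b2]) auto
  moreover have "{..<s} \<union> ({..<N} - {..<s}) = {..<N}" using assms by auto
  moreover have "B \<union> ({..<N} - B) = {..<N}" using assms by auto
  ultimately have "bij_betw \<sigma> {..<N} {..<N}" by simp
  moreover have "\<forall>y. y \<notin> {..<N} \<longrightarrow> \<sigma> y = y" using assms by (auto simp: \<sigma>_def)
  ultimately have "\<sigma> permutes {..<N}" by (metis bij_imp_permutes)
  thus ?thesis by (auto simp: \<sigma>_def)
qed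


lemma abstract_construction:
  fixes n :: nat and v :: "nat \<Rightarrow> complex" and blk :: "nat \<Rightarrow> nat set" and \<rho> :: "nat \<Rightarrow> nat"
  defines "N \<equiv> 2 ^ n"
  assumes blk_in: "\<And>a. a < N \<Longrightarrow> a \<in> blk a"
    and blk_sub: "\<And>a. a < N \<Longrightarrow> blk a \<subseteq> {..<N}"
    and blk_eq: "\<And>a b. a < N \<Longrightarrow> b \<in> blk a \<Longrightarrow> blk b = blk a"
    and cv: "\<And>a b. a < N \<Longrightarrow> b \<in> blk a \<Longrightarrow> cmod (v b) = cmod (v a)"
    and cr: "\<And>a b. a < N \<Longrightarrow> b \<in> blk a \<Longrightarrow> \<rho> b = \<rho> a"
    and card: "\<And>a. a < N \<Longrightarrow> card (blk a) = 2 ^ \<rho> a"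
  shows "\<exists>(m::nat) (K :: nat \<Rightarrow> nat \<Rightarrow> nat \<Rightarrow> complex) (r :: nat \<Rightarrow> nat).
    incoherent_op N m K \<and>
    (\<forall>j<m. sq_norm N (op_apply N (K j) v) > 0 \<longrightarrow>
       r j \<le> n \<and>
       (\<exists>\<sigma>. \<sigma> permutes {..<N} \<and>
          (\<forall>y<N. op_apply N (K j) v (\<sigma> y)
                / complex_of_real (sqrt (sq_norm N (op_apply N (K j) v)))
             = maxcoh_padded (r j) y))) \<and>
    (\<Sum>j<m. sq_norm N (op_apply N (K j) v) * real (r j)) = (\<Sum>a<N. (cmod (v a))\<^sup>2 * real (\<rho> a))"
proof -
  define lead where "lead j \<longleftrightarrow> j < N \<and> j = Min (blk j)" for j
  define ph where "ph a = (if v a = 0 then 1 else cnj (v a) / complex_of_real (cmod (v a)))" for a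
  define d where "d j a = (if a \<in> blk j \<and> lead j then ph a else 0)" for j a
  have ph1: "cnj (ph a) * ph a = 1" for a
  proof (cases "v a = 0")
    case False
    have c0: "complex_of_real (cmod (v a)) \<noteq> 0" using False by simp
    have "cnj (cnj (v a) / complex_of_real (cmod (v a))) * (cnj (v a) / complex_of_real (cmod (v a)))
          = (v a * cnj (v a)) / (complex_of_real (cmod (v a)))^2"
      by (simp add: power2_eq_square)
    also have "\<dots> = 1" using c0 by (simp add: complex_norm_square[symmetric])
    finally show ?thesis using False by (simp add: ph_def)
  qed (simp add: ph_def)
  have phv: "ph a * v a = complex_of_real (cmod (v a))" for a
  proof (cases "v a = 0")
    case False
    have "cnj (v a) * v a = complex_of_real ((cmod (v a))^2)"
      by (metis complex_norm_square mult.commute of_real_power)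
    then show ?thesis using False by (simp add: ph_def power2_eq_square field_simps)
  qed (simp add: ph_def)
  define K where "K j = (\<lambda>a c. if c = a then d j a else 0)" for j :: nat
  have fin: "\<And>a. a < N \<Longrightarrow> finite (blk a)" using blk_sub finite_subset by blast
  have minin: "\<And>a. a < N \<Longrightarrow> Min (blk a) \<in> blk a" by (metis Min_in empty_iff fin blk_in)
  have leadin: "\<And>j a. lead j \<Longrightarrow> a \<in> blk j \<Longrightarrow> a < N" using blk_sub lead_def by blast
  have lead_unique: "\<And>a j. a < N \<Longrightarrow> (lead j \<and> a \<in> blk j) \<longleftrightarrow> j = Min (blk a)"
  proof
    fix a j assume a: "a < N" and h: "lead j \<and> a \<in> blk j"
    then have "blk a = blk j" using blk_eq lead_def by metis
    thus "j = Min (blk a)" using h lead_def by auto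
  next
    fix a j assume a: "a < N" and h: "j = Min (blk a)"
    then have jin: "j \<in> blk a" using minin by simp
    then have jN: "j < N" using blk_sub a by blast
    have "blk j = blk a" using blk_eq[OF a jin] .
    thus "lead j \<and> a \<in> blk j" using h jN blk_in a by (auto simp: lead_def)
  qed
  have opK: "op_apply N (K j) v a = (if a \<in> blk j \<and> lead j then complex_of_real (cmod (v a)) else 0)" for j a
  proof -
    have "op_apply N (K j) v a = (if a < N then d j a * v a else 0)"
      by (simp add: op_apply_def K_def if_distrib[of "\<lambda>x. x * _"] sum.delta' cong: if_cong)
    also have "\<dots> = (if a \<in> blk j \<and> lead j then complex_of_real (cmod (v a)) else 0)"
      using leadin phv by (auto simp: d_def)
    finally show ?thesis .
  qed
  have sqn: "sq_norm N (op_apply N (K j) v) = (if lead j then real (2 ^ \<rho> j) * (cmod (v j))\<^sup>2 else 0)" for j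
  proof (cases "lead j")
    case True
    then have jN: "j < N" by (simp add: lead_def)
    have "sq_norm N (op_apply N (K j) v) = (\<Sum>a<N. if a \<in> blk j then (cmod (v j))\<^sup>2 else 0)"
      unfolding sq_norm_def opK using True cv[OF jN] by (intro sum.cong) auto
    also have "\<dots> = (\<Sum>a\<in>blk j. (cmod (v j))\<^sup>2)"
      using blk_sub[OF jN] by (simp add: sum.If_cases Int_absorb1 Int_commute)
    also have "\<dots> = real (2 ^ \<rho> j) * (cmod (v j))\<^sup>2" using card[OF jN] by simp
    finally show ?thesis using True by simp
  qed (simp add: sq_norm_def opK)
  show ?thesis
  proof (rule exI[of _ N], rule exI[of _ K], rule exI[of _ \<rho>], intro conjI allI impI)
    show "incoherent_op N N K"
      unfolding incoherent_op_def
    proof (intro conjI allI impI)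
      show "kraus_complete N N K"
        unfolding kraus_complete_def
      proof (intro allI impI)
        fix a b assume a: "a < N" and b: "b < N"
        have "(\<Sum>j<N. \<Sum>i<N. cnj (K j i a) * K j i b) = (\<Sum>j<N. if a = b then cnj (d j a) * d j a else 0)"
        proof (intro sum.cong refl)
          fix j
          have "(\<Sum>i<N. cnj (K j i a) * K j i b) = (\<Sum>i<N. if i = a then (if a = b then cnj (d j a) * d j a else 0) else 0)"
            by (intro sum.cong) (auto simp: K_def)
          also have "\<dots> = (if a = b then cnj (d j a) * d j a else 0)" using a by (simp add: sum.delta')
          finally show "(\<Sum>i<N. cnj (K j i a) * K j i b) = (if a = b then cnj (d j a) * d j a else 0)" .
        qed
        also have "\<dots> = (if a = b then 1 else 0)"
        proof (cases "a = b")
          case True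
          have "(\<Sum>j<N. cnj (d j a) * d j a) = (\<Sum>j<N. if j = Min (blk a) then 1 else 0)"
          proof (intro sum.cong refl)
            fix j assume "j \<in> {..<N}"
            show "cnj (d j a) * d j a = (if j = Min (blk a) then 1 else 0)"
            proof (cases "j = Min (blk a)")
              case True
              then have "a \<in> blk j \<and> lead j" using lead_unique a by blast
              then have "d j a = ph a" by (simp add: d_def)
              moreover note ph1[of a]
              ultimately show ?thesis using True by simp
            next
              case False
              then have "\<not> (a \<in> blk j \<and> lead j)" using lead_unique a by blast
              then show ?thesis using False unfolding d_def by auto
            qed
          qed
          also have "\<dots> = 1" using minin[OF a] blk_sub[OF a] by (simp add: sum.delta' subset_eq)
          finally show ?thesis using True by simp
        qed simp
        finally show "(\<Sum>j<N. \<Sum>i<N. cnj (K j i a) * K j i b) = (if a = b then 1 else 0)" .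
      qed
    next
      fix j D assume "j < N" and D: "is_diag N D"
      show "is_diag N (conj_by N (K j) D)"
        unfolding is_diag_def
      proof (intro allI impI)
        fix a b assume a: "a < N" and b: "b < N" and ab: "a \<noteq> b"
        have "conj_by N (K j) D a b = d j a * D a b * cnj (d j b)"
        proof -
          have "conj_by N (K j) D a b = (\<Sum>c<N. if c = a then (\<Sum>e<N. if e = b then d j a * D a b * cnj (d j b) else 0) else 0)"
            unfolding conj_by_def
          proof (intro sum.cong refl)
            fix c
            have "(\<Sum>e<N. K j a c * D c e * cnj (K j b e)) = (\<Sum>e<N. if e = b then K j a c * D c b * cnj (d j b) else 0)"
              by (intro sum.cong) (auto simp: K_def)
            thus "(\<Sum>e<N. K j a c * D c e * cnj (K j b e)) = (if c = a then (\<Sum>e<N. if e = b then d j a * D a b * cnj (d j b) else 0) else 0)"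
              by (auto simp: K_def)
          qed
          also have "\<dots> = d j a * D a b * cnj (d j b)" using a b by (simp add: sum.delta')
          finally show ?thesis .
        qed
        thus "conj_by N (K j) D a b = 0" using D a b ab by (simp add: is_diag_def)
      qed
    qed
  next
    fix j assume jm: "j < N" and pos: "0 < sq_norm N (op_apply N (K j) v)"
    then have lj: "lead j" using sqn by (auto split: if_splits)
    have cb: "card (blk j) = 2 ^ \<rho> j" using card jm by blast
    have "2 ^ \<rho> j \<le> N" using cb blk_sub[OF jm] by (metis card_lessThan card_mono finite_lessThan)
    then show "\<rho> j \<le> n" unfolding N_def by simp
    obtain f :: "nat \<Rightarrow> nat" where f: "bij_betw f {..<2 ^ \<rho> j} (blk j)"
      using cb fin[OF jm] by (metis card_lessThan finite_lessThan finite_same_card_bij)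
    obtain \<sigma> where \<sigma>: "\<sigma> permutes {..<N}" and \<sigma>f: "\<forall>y<2 ^ \<rho> j. \<sigma> y = f y"
      using extend_perm[OF f blk_sub[OF jm] \<open>2 ^ \<rho> j \<le> N\<close>] by blast
    have img: "\<sigma> y \<in> blk j \<longleftrightarrow> y < 2 ^ \<rho> j" if y: "y < N" for y :: nat
    proof
      assume h: "\<sigma> y \<in> blk j"
      then obtain z where z: "z < 2 ^ \<rho> j" "f z = \<sigma> y" using f by (metis bij_betw_iff_bijections lessThan_iff)
      have zN: "z < N" using z \<open>2 ^ \<rho> j \<le> N\<close> by linarith
      have "\<sigma> z = \<sigma> y" using \<sigma>f z by simp
      then have "z = y" using \<sigma> zN y by (metis permutes_inj inj_eq)
      thus "y < 2 ^ \<rho> j" using z by simp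
    next
      assume "y < 2 ^ \<rho> j"
      thus "\<sigma> y \<in> blk j" using \<sigma>f f by (metis bij_betwE lessThan_iff)
    qed
    show "\<exists>\<sigma>. \<sigma> permutes {..<N} \<and>
          (\<forall>y<N. op_apply N (K j) v (\<sigma> y)
                / complex_of_real (sqrt (sq_norm N (op_apply N (K j) v)))
             = maxcoh_padded (\<rho> j) y)"
    proof (intro exI conjI allI impI)
      show "\<sigma> permutes {..<N}" by fact
      fix y assume y: "y < N"
      have vj: "cmod (v j) > 0" using pos lj by (auto simp: sqn)
      show "op_apply N (K j) v (\<sigma> y) / complex_of_real (sqrt (sq_norm N (op_apply N (K j) v)))
             = maxcoh_padded (\<rho> j) y"
      proof (cases "y < 2 ^ \<rho> j")
        case True
        then have s: "\<sigma> y \<in> blk j" using img y by blast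
        have "cmod (v (\<sigma> y)) = cmod (v j)" using cv[OF jm s] .
        moreover have "sqrt (real (2 ^ \<rho> j) * (cmod (v j))\<^sup>2) = sqrt 2 ^ \<rho> j * cmod (v j)"
          by (simp add: real_sqrt_mult real_sqrt_power)
        moreover have "(1 / sqrt 2) ^ \<rho> j = 1 / sqrt 2 ^ \<rho> j" by (simp add: power_one_over)
        ultimately show ?thesis using True s lj vj
          by (simp add: opK sqn maxcoh_padded_def del: of_real_power)
      next
        case False
        then have s: "\<sigma> y \<notin> blk j" using img y by blast
        thus ?thesis using False by (simp add: opK maxcoh_padded_def)
      qed
    qed
  next
    have "(\<Sum>a<N. (cmod (v a))\<^sup>2 * real (\<rho> a)) =
          (\<Sum>j<N. \<Sum>a\<in>{a \<in> {..<N}. Min (blk a) = j}. (cmod (v a))\<^sup>2 * real (\<rho> a))"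
    proof (rule sum.group[symmetric])
      show "(\<lambda>a. Min (blk a)) ` {..<N} \<subseteq> {..<N}" using minin blk_sub by blast
    qed auto
    also have "\<dots> = (\<Sum>j<N. sq_norm N (op_apply N (K j) v) * real (\<rho> j))"
    proof (intro sum.cong refl)
      fix j assume jN: "j \<in> {..<N}"
      have S: "{a \<in> {..<N}. Min (blk a) = j} = (if lead j then blk j else {})"
        using lead_unique leadin by (auto simp del: lessThan_iff) (metis lessThan_iff)
      show "(\<Sum>a\<in>{a \<in> {..<N}. Min (blk a) = j}. (cmod (v a))\<^sup>2 * real (\<rho> a)) =
            sq_norm N (op_apply N (K j) v) * real (\<rho> j)"
      proof (cases "lead j")
        case True
        have "(\<Sum>a\<in>blk j. (cmod (v a))\<^sup>2 * real (\<rho> a)) = (\<Sum>a\<in>blk j. (cmod (v j))\<^sup>2 * real (\<rho> j))"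
          using cv cr jN by (intro sum.cong) auto
        also have "\<dots> = real (2 ^ \<rho> j) * (cmod (v j))\<^sup>2 * real (\<rho> j)" using card jN by simp
        finally show ?thesis using True S sqn by simp
      qed (unfold S, simp add: sqn)
    qed
    finally show "(\<Sum>j<N. sq_norm N (op_apply N (K j) v) * real (\<rho> j)) = (\<Sum>a<N. (cmod (v a))\<^sup>2 * real (\<rho> a))" by simp
  qed
qed


lemma qbit_decode: "qbit x k \<longleftrightarrow> k \<in> set_decode x"
  by (simp add: qbit_def set_decode_def)

lemma lt_pow_iff: "x < 2 ^ n \<longleftrightarrow> set_decode x \<subseteq> {..<n}"
proof
  assume x: "x < 2 ^ n"
  show "set_decode x \<subseteq> {..<n}"
  proof
    fix k assume "k \<in> set_decode x"
    then have "odd (x div 2 ^ k)" by (simp add: set_decode_def)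
    then have "0 < x div 2 ^ k" by (simp add: odd_pos)
    then have "2 ^ k \<le> x" by (simp add: div_greater_zero_iff)
    then have "(2::nat) ^ k < 2 ^ n" using x by linarith
    thus "k \<in> {..<n}" by simp
  qed
next
  assume S: "set_decode x \<subseteq> {..<n}"
  have "x = set_encode (set_decode x)" by simp
  also have "\<dots> = (\<Sum>k\<in>set_decode x. 2 ^ k)" by (simp add: set_encode_def)
  also have "\<dots> \<le> (\<Sum>k<n. 2 ^ k)" using S by (intro sum_mono2) auto
  also have "\<dots> = 2 ^ n - 1" using sum_power2[of n] by (simp add: atLeast0LessThan)
  finally have "x \<le> 2 ^ n - 1" .
  moreover have "(0::nat) < 2 ^ n" by simp
  ultimately show "x < 2 ^ n" by linarith
qed

definition pc :: "nat \<Rightarrow> nat \<Rightarrow> nat" where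
  "pc n x = card {k. k < n \<and> qbit x k}"

lemma pc_lt: "x < 2 ^ n \<Longrightarrow> pc n x = card (set_decode x)"
proof -
  assume "x < 2 ^ n"
  then have "{k. k < n \<and> k \<in> set_decode x} = set_decode x" using lt_pow_iff[of x n] by auto
  thus ?thesis unfolding pc_def qbit_decode by simp
qed

lemma pc_le: "pc n x \<le> n"
  unfolding pc_def by (rule order_trans[OF card_mono[of "{..<n}"]]) auto

lemma card_type: "card {x. x < 2 ^ n \<and> pc n x = k} = n choose k"
proof -
  have "bij_betw set_decode {x. x < 2 ^ n \<and> pc n x = k} {S. S \<subseteq> {..<n} \<and> card S = k}"
  proof (rule bij_betw_byWitness[where f' = set_encode])
    show "\<forall>a\<in>{x. x < 2 ^ n \<and> pc n x = k}. set_encode (set_decode a) = a" by simp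
    show "\<forall>a'\<in>{S. S \<subseteq> {..<n} \<and> card S = k}. set_decode (set_encode a') = a'"
    proof
      fix S assume "S \<in> {S. S \<subseteq> {..<n} \<and> card S = k}"
      then have "finite S" using finite_subset by auto
      thus "set_decode (set_encode S) = S" by simp
    qed
    show "set_decode ` {x. x < 2 ^ n \<and> pc n x = k} \<subseteq> {S. S \<subseteq> {..<n} \<and> card S = k}"
      using lt_pow_iff pc_lt by auto
    show "set_encode ` {S. S \<subseteq> {..<n} \<and> card S = k} \<subseteq> {x. x < 2 ^ n \<and> pc n x = k}"
    proof
      fix x assume "x \<in> set_encode ` {S. S \<subseteq> {..<n} \<and> card S = k}"
      then obtain S where S: "S \<subseteq> {..<n}" "card S = k" "x = set_encode S" by blast
      have fS: "finite S" using S finite_subset by blast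
      then have "set_decode x = S" using S by simp
      then have "x < 2 ^ n" using S lt_pow_iff by blast
      thus "x \<in> {x. x < 2 ^ n \<and> pc n x = k}" using pc_lt \<open>set_decode x = S\<close> S by auto
    qed
  qed
  then have "card {x. x < 2 ^ n \<and> pc n x = k} = card {S. S \<subseteq> {..<n} \<and> card S = k}"
    by (rule bij_betw_same_card)
  also have "\<dots> = n choose k" using n_subsets[of "{..<n}" k] by simp
  finally show ?thesis .
qed

lemma prod_state_eq: "prod_state n \<alpha> \<beta> x = \<beta> ^ pc n x * \<alpha> ^ (n - pc n x)"
proof -
  have "prod_state n \<alpha> \<beta> x = (\<Prod>k\<in>{k. k < n \<and> qbit x k}. \<beta>) * (\<Prod>k\<in>{k. k < n \<and> \<not> qbit x k}. \<alpha>)"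
  proof -
    have e1: "{..<n} \<inter> Collect (qbit x) = {k. k < n \<and> qbit x k}" by auto
    have e2: "{..<n} \<inter> - Collect (qbit x) = {k. k < n \<and> \<not> qbit x k}" by auto
    show ?thesis unfolding prod_state_def by (subst prod.If_cases) (simp_all add: e1 e2)
  qed
  also have "card {k. k < n \<and> \<not> qbit x k} = n - pc n x"
  proof -
    have "{k. k < n \<and> \<not> qbit x k} = {..<n} - {k. k < n \<and> qbit x k}" by auto
    moreover have "{k. k < n \<and> qbit x k} \<subseteq> {..<n}" by auto
    ultimately show ?thesis unfolding pc_def by (metis card_Diff_subset card_lessThan finite_subset finite_lessThan)
  qed
  ultimately show ?thesis by (simp add: pc_def)
qed


lemma blocks_exist:
  fixes n :: nat and a :: "nat \<Rightarrow> nat"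
  shows "\<exists>(blk :: nat \<Rightarrow> nat set) (\<rho> :: nat \<Rightarrow> nat).
     (\<forall>x<2^n. x \<in> blk x \<and> blk x \<subseteq> {..<2^n} \<and> card (blk x) = 2 ^ \<rho> x \<and>
        (\<forall>y\<in>blk x. blk y = blk x \<and> pc n y = pc n x \<and> \<rho> y = \<rho> x)) \<and>
     (\<forall>g :: nat \<Rightarrow> real. (\<Sum>x<2^n. g (pc n x) * real (\<rho> x)) =
        (\<Sum>k\<le>n. g k * real (a k) * real ((n choose k) div 2 ^ a k * 2 ^ a k)))"
proof -
  define T where "T k = {x. x < 2 ^ n \<and> pc n x = k}" for k
  define C where "C k = card (T k)" for k
  have finT: "finite (T k)" for k unfolding T_def by simp
  have "\<forall>k. \<exists>e. bij_betw e {..<C k} (T k)"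
    using finT unfolding C_def by (metis atLeast0LessThan ex_bij_betw_nat_finite)
  then obtain e where e: "\<And>k. bij_betw (e k) {..<C k} (T k)" by metis
  define s where "s k = (2::nat) ^ a k" for k
  define F where "F k = C k div s k * s k" for k
  define idx where "idx x = inv_into {..<C (pc n x)} (e (pc n x)) x" for x
  define blk where "blk x = (if idx x < F (pc n x) then e (pc n x) ` {idx x div s (pc n x) * s (pc n x) ..< idx x div s (pc n x) * s (pc n x) + s (pc n x)} else {x})" for x
  define \<rho> where "\<rho> x = (if idx x < F (pc n x) then a (pc n x) else 0)" for x
  have spos: "s k > 0" for k by (simp add: s_def)
  have FC: "F k \<le> C k" for k by (simp add: F_def)
  have inT: "x < 2^n \<Longrightarrow> x \<in> T (pc n x)" for x by (simp add: T_def)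
  have idx_lt: "x < 2^n \<Longrightarrow> idx x < C (pc n x)" for x
    unfolding idx_def using e inT by (meson bij_betw_inv_into bij_betwE lessThan_iff)
  have e_idx: "x < 2^n \<Longrightarrow> e (pc n x) (idx x) = x" for x
    unfolding idx_def using e inT by (meson bij_betw_inv_into_right)
  have pc_e: "i < C k \<Longrightarrow> pc n (e k i) = k" for i k
    using e[of k] by (auto simp: T_def dest: bij_betwE)
  have lt_e: "i < C k \<Longrightarrow> e k i < 2 ^ n" for i k
    using e[of k] by (auto simp: T_def dest: bij_betwE)
  have idx_e: "i < C k \<Longrightarrow> idx (e k i) = i" for i k
    unfolding idx_def pc_e using e[of k] by (simp add: bij_betw_inv_into_left)
  have interval_sub: "i < F k \<Longrightarrow> {i div s k * s k ..< i div s k * s k + s k} \<subseteq> {..<F k}" for i k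
  proof -
    assume i: "i < F k"
    have "i div s k < C k div s k" using i spos unfolding F_def
      by (metis div_less_iff_less_mult)
    then have "i div s k + 1 \<le> C k div s k" by simp
    then have "(i div s k + 1) * s k \<le> C k div s k * s k" by (rule mult_right_mono) simp
    thus ?thesis unfolding F_def by (auto simp: algebra_simps)
  qed
  have P1: "x \<in> blk x \<and> blk x \<subseteq> {..<2^n} \<and> card (blk x) = 2 ^ \<rho> x \<and>
        (\<forall>y\<in>blk x. blk y = blk x \<and> pc n y = pc n x \<and> \<rho> y = \<rho> x)" if x: "x < 2^n" for x
  proof (cases "idx x < F (pc n x)")
    case False
    then show ?thesis using x by (simp add: blk_def \<rho>_def)
  next
    case True
    define k where "k = pc n x"
    define q where "q = idx x div s k"
    define I where "I = {q * s k ..< q * s k + s k}"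
    have Ik: "I \<subseteq> {..<F k}" using interval_sub True unfolding I_def q_def k_def by blast
    have IC: "I \<subseteq> {..<C k}"
    proof
      fix i assume "i \<in> I"
      then have "i < F k" using Ik by auto
      thus "i \<in> {..<C k}" using FC[of k] by simp
    qed
    have bx: "blk x = e k ` I" using True by (simp add: blk_def I_def q_def k_def)
    have rx: "\<rho> x = a k" using True by (simp add: \<rho>_def k_def)
    have iI: "idx x \<in> I"
    proof -
      have "idx x div s k * s k + idx x mod s k = idx x" by (rule div_mult_mod_eq)
      moreover have "idx x mod s k < s k" using spos[of k] by simp
      ultimately have "idx x div s k * s k \<le> idx x \<and> idx x < idx x div s k * s k + s k" by linarith
      thus ?thesis unfolding I_def q_def by simp
    qed
    have "e k (idx x) = x" using e_idx[OF x] by (simp add: k_def)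
    then have "x \<in> blk x" unfolding bx by (metis iI image_eqI)
    moreover have "blk x \<subseteq> {..<2^n}" using bx IC lt_e by auto
    moreover have "card (blk x) = 2 ^ \<rho> x"
    proof -
      have "inj_on (e k) I" using e[of k] IC bij_betw_imp_inj_on inj_on_subset by blast
      then have "card (blk x) = card I" using bx by (simp add: card_image)
      thus ?thesis by (simp add: I_def rx s_def)
    qed
    moreover have "\<forall>y\<in>blk x. blk y = blk x \<and> pc n y = pc n x \<and> \<rho> y = \<rho> x"
    proof
      fix y assume "y \<in> blk x"
      then obtain i where i: "i \<in> I" "y = e k i" using bx by blast
      have iC: "i < C k" using i IC by auto
      have py: "pc n y = k" using pc_e iC i by simp
      have iy: "idx y = i" using idx_e iC i by simp
      have iF: "i < F k" using Ik i by auto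
      have qi: "i div s k = q"
      proof (rule div_nat_eqI)
        show "s k * q \<le> i" using i(1) unfolding I_def by (simp add: mult.commute)
        show "i < s k * Suc q" using i(1) unfolding I_def by (simp add: algebra_simps)
      qed
      have "blk y = e k ` I" using py iy iF qi by (simp add: blk_def I_def)
      moreover have "\<rho> y = a k" using py iy iF by (simp add: \<rho>_def)
      ultimately show "blk y = blk x \<and> pc n y = pc n x \<and> \<rho> y = \<rho> x" using bx rx py k_def by simp
    qed
    ultimately show ?thesis by blast
  qed
  have P2: "(\<Sum>x<2^n. g (pc n x) * real (\<rho> x)) =
        (\<Sum>k\<le>n. g k * real (a k) * real ((n choose k) div 2 ^ a k * 2 ^ a k))" for g :: "nat \<Rightarrow> real"
  proof -
    have "(\<Sum>x<2^n. g (pc n x) * real (\<rho> x)) = (\<Sum>k\<le>n. \<Sum>x\<in>{x \<in> {..<2^n}. pc n x = k}. g (pc n x) * real (\<rho> x))"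
      by (rule sum.group[symmetric]) (auto simp: pc_le)
    also have "\<dots> = (\<Sum>k\<le>n. g k * real (a k) * real ((n choose k) div 2 ^ a k * 2 ^ a k))"
    proof (intro sum.cong refl)
      fix k assume "k \<in> {..n}"
      have Tk: "{x \<in> {..<2^n}. pc n x = k} = T k" by (auto simp: T_def)
      have Ck: "C k = n choose k" using card_type by (simp add: C_def T_def)
      have "(\<Sum>x\<in>T k. g (pc n x) * real (\<rho> x)) = (\<Sum>x\<in>T k. if idx x < F k then g k * real (a k) else 0)"
        by (intro sum.cong refl) (auto simp: T_def \<rho>_def)
      also have "\<dots> = (\<Sum>x\<in>{x \<in> T k. idx x < F k}. g k * real (a k))"
        using finT[of k] by (simp only: sum.inter_filter)
      also have "{x \<in> T k. idx x < F k} = e k ` {..<F k}"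
      proof
        show "{x \<in> T k. idx x < F k} \<subseteq> e k ` {..<F k}"
        proof
          fix x assume "x \<in> {x \<in> T k. idx x < F k}"
          then have x: "x < 2^n" "pc n x = k" "idx x < F k" by (auto simp: T_def)
          thus "x \<in> e k ` {..<F k}" using e_idx[OF x(1)] by force
        qed
        show "e k ` {..<F k} \<subseteq> {x \<in> T k. idx x < F k}"
        proof
          fix y assume "y \<in> e k ` {..<F k}"
          then obtain i where i: "i < F k" "y = e k i" by blast
          have iC: "i < C k" using i FC[of k] by simp
          show "y \<in> {x \<in> T k. idx x < F k}" using i iC idx_e pc_e lt_e by (simp add: T_def)
        qed
      qed
      also have "card (e k ` {..<F k}) = F k"
      proof -
        have "inj_on (e k) {..<F k}" using e[of k] FC[of k] bij_betw_imp_inj_on inj_on_subset by (metis lessThan_subset_iff)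
        thus ?thesis by (simp add: card_image)
      qed
      ultimately show "(\<Sum>x\<in>{x \<in> {..<2^n}. pc n x = k}. g (pc n x) * real (\<rho> x)) = g k * real (a k) * real ((n choose k) div 2 ^ a k * 2 ^ a k)"
        unfolding Tk by (simp add: F_def s_def Ck)
    qed
    finally show ?thesis .
  qed
  show ?thesis using P1 P2 by blast
qed


lemma binom_sum1:
  fixes p q :: real assumes "p + q = 1"
  shows "(\<Sum>k\<le>n. real (n choose k) * p ^ k * q ^ (n - k)) = 1"
  using binomial_ring[of p q n] assms by simp

lemma binom_sumk:
  fixes p q :: real assumes "p + q = 1"
  shows "(\<Sum>k\<le>n. real k * (real (n choose k) * p ^ k * q ^ (n - k))) = real n * p"
proof (cases n)
  case 0 thus ?thesis by simp
next
  case (Suc m)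
  have "(\<Sum>k\<le>Suc m. real k * (real (Suc m choose k) * p ^ k * q ^ (Suc m - k)))
      = (\<Sum>k\<le>m. real (Suc k) * (real (Suc m choose Suc k) * p ^ Suc k * q ^ (Suc m - Suc k)))"
    by (subst sum.atMost_Suc_shift) simp
  also have "\<dots> = (\<Sum>k\<le>m. real (Suc m) * p * (real (m choose k) * p ^ k * q ^ (m - k)))"
  proof (intro sum.cong refl)
    fix k
    have "real (Suc k) * real (Suc m choose Suc k) = real (Suc m) * real (m choose k)"
      using Suc_times_binomial[of k m] by (metis of_nat_mult)
    thus "real (Suc k) * (real (Suc m choose Suc k) * p ^ Suc k * q ^ (Suc m - Suc k)) =
          real (Suc m) * p * (real (m choose k) * p ^ k * q ^ (m - k))"
    proof -
      have "real (Suc k) * (real (Suc m choose Suc k) * p ^ Suc k * q ^ (Suc m - Suc k))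
           = (real (Suc k) * real (Suc m choose Suc k)) * p * (p ^ k * q ^ (m - k))"
        by (simp add: algebra_simps)
      also have "\<dots> = real (Suc m) * p * (real (m choose k) * p ^ k * q ^ (m - k))"
        unfolding \<open>real (Suc k) * real (Suc m choose Suc k) = real (Suc m) * real (m choose k)\<close>
        by (simp add: algebra_simps)
      finally show ?thesis .
    qed
  qed
  also have "\<dots> = real (Suc m) * p" using binom_sum1[OF assms, of m] by (simp add: sum_distrib_left[symmetric])
  finally show ?thesis using Suc by simp
qed

lemma entropy_bound:
  fixes P :: "nat \<Rightarrow> real"
  assumes pos: "\<And>k. k \<le> n \<Longrightarrow> P k > 0" and s1: "(\<Sum>k\<le>n. P k) = 1"
  shows "(\<Sum>k\<le>n. P k * ln (P k)) \<ge> - ln (real n + 1)"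
proof -
  have "P k * ln (1 / P k) - P k * ln (real n + 1) \<le> 1 / (real n + 1) - P k" if k: "k \<le> n" for k
  proof -
    have Pk: "P k > 0" using pos k by simp
    have "ln (1 / ((real n + 1) * P k)) \<le> 1 / ((real n + 1) * P k) - 1"
      using Pk by (intro ln_le_minus_one) simp
    also have "ln (1 / ((real n + 1) * P k)) = ln (1 / P k) - ln (real n + 1)"
      using Pk by (simp add: ln_div ln_mult)
    finally have "P k * (ln (1 / P k) - ln (real n + 1)) \<le> P k * (1 / ((real n + 1) * P k) - 1)"
      using Pk by (intro mult_left_mono) auto
    moreover have "P k * (1 / ((real n + 1) * P k) - 1) = 1 / (real n + 1) - P k"
    proof -
      have "(real n + 1) * P k \<noteq> 0" using Pk by simp
      thus ?thesis by (simp add: field_simps)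
    qed
    moreover have "P k * (ln (1 / P k) - ln (real n + 1)) = P k * ln (1 / P k) - P k * ln (real n + 1)"
      by (simp add: algebra_simps)
    ultimately show ?thesis by linarith
  qed
  then have "(\<Sum>k\<le>n. P k * ln (1 / P k) - P k * ln (real n + 1)) \<le> (\<Sum>k\<le>n. 1 / (real n + 1) - P k)"
    by (intro sum_mono) auto
  also have "\<dots> = 0" using s1 by (simp add: sum_subtractf)
  finally have "(\<Sum>k\<le>n. P k * ln (1 / P k)) \<le> ln (real n + 1)"
    using s1 by (simp add: sum_subtractf sum_distrib_right[symmetric])
  moreover have "(\<Sum>k\<le>n. P k * ln (1 / P k)) = - (\<Sum>k\<le>n. P k * ln (P k))"
  proof -
    have "(\<Sum>k\<le>n. P k * ln (1 / P k)) = (\<Sum>k\<le>n. - (P k * ln (P k)))"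
      using pos by (intro sum.cong refl) (simp add: ln_div)
    thus ?thesis by (simp add: sum_negf)
  qed
  ultimately show ?thesis by simp
qed


lemma perk:
  fixes C b t :: nat
  assumes lo: "2 ^ b \<le> C" and hi: "C < 2 ^ Suc b"
  shows "real ((b - t) * (C div 2 ^ (b - t) * 2 ^ (b - t))) \<ge> real C * (1 - 1 / 2 ^ t) * (log 2 (real C) - real t - 1)"
proof -
  have "(0::nat) < 2 ^ b" by simp
  then have "C > 0" using lo by linarith
  then have Cpos: "real C > 0" by simp
  have "real C < real (2 ^ Suc b)" using hi by (simp only: of_nat_less_iff)
  moreover have "real (2 ^ Suc b) = 2 powr real (Suc b)" by (simp only: of_nat_power powr_realpow) simp
  ultimately have "real C < 2 powr real (Suc b)" by simp
  then have lC: "log 2 (real C) < real b + 1"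
    using Cpos by (simp add: log_less_iff add.commute)
  have d: "0 \<le> 1 - 1 / (2::real) ^ t" by simp
  show ?thesis
  proof (cases "log 2 (real C) - real t - 1 \<le> 0")
    case True
    have "real C * (1 - 1 / 2 ^ t) * (log 2 (real C) - real t - 1) \<le> 0"
      using True Cpos d by (simp add: mult_nonneg_nonpos)
    moreover have "0 \<le> real ((b - t) * (C div 2 ^ (b - t) * 2 ^ (b - t)))" by simp
    ultimately show ?thesis by linarith
  next
    case False
    then have bt: "t \<le> b" using lC by linarith
    define a where "a = b - t"
    have ab: "a + t = b" using bt by (simp add: a_def)
    have "2 ^ a * 2 ^ t \<le> C" using lo ab by (simp add: power_add[symmetric])
    then have "real (2 ^ a * 2 ^ t) \<le> real C" by (simp only: of_nat_le_iff)
    then have "real (2 ^ a) * 2 ^ t \<le> real C" by simp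
    then have sC: "real (2 ^ a) \<le> real C / 2 ^ t" by (simp add: field_simps)
    have "C mod 2 ^ a < 2 ^ a" by simp
    moreover have "C div 2 ^ a * 2 ^ a + C mod 2 ^ a = C" by (rule div_mult_mod_eq)
    ultimately have "C \<le> C div 2 ^ a * 2 ^ a + 2 ^ a" by linarith
    then have "real C \<le> real (C div 2 ^ a * 2 ^ a + 2 ^ a)" by (simp only: of_nat_le_iff)
    then have "real (C div 2 ^ a * 2 ^ a) \<ge> real C - real (2 ^ a)" by (simp only: of_nat_add)
    then have D: "real (C div 2 ^ a * 2 ^ a) \<ge> real C * (1 - 1 / 2 ^ t)"
      using sC by (simp add: algebra_simps)
    have aL: "real a \<ge> log 2 (real C) - real t - 1" using lC bt by (simp add: a_def)
    have "real C * (1 - 1 / 2 ^ t) * (log 2 (real C) - real t - 1)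
          \<le> real (C div 2 ^ a * 2 ^ a) * real a"
      using False D aL Cpos d by (intro mult_mono) auto
    thus ?thesis by (simp add: a_def mult.commute)
  qed
qed


lemma log_entropy_sum:
  fixes p q :: real
  assumes p: "p > 0" and q: "q > 0" and pq: "p + q = 1"
  shows "(\<Sum>k\<le>n. (real (n choose k) * p ^ k * q ^ (n - k)) * log 2 (real (n choose k)))
         \<ge> real n * (-(p * log 2 p + q * log 2 q)) - log 2 (real n + 1)"
proof -
  define P where "P k = real (n choose k) * p ^ k * q ^ (n - k)" for k
  have Ppos: "k \<le> n \<Longrightarrow> P k > 0" for k using p q by (simp add: P_def)
  have s1: "(\<Sum>k\<le>n. P k) = 1" using binom_sum1[OF pq] by (simp add: P_def)
  have sk: "(\<Sum>k\<le>n. real k * P k) = real n * p" using binom_sumk[OF pq] by (simp add: P_def)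
  have snk: "(\<Sum>k\<le>n. real (n - k) * P k) = real n * q"
  proof -
    have "(\<Sum>k\<le>n. real (n - k) * P k) = (\<Sum>k\<le>n. real n * P k - real k * P k)"
      by (intro sum.cong refl) (simp add: of_nat_diff algebra_simps)
    also have "\<dots> = real n - real n * p" using s1 sk by (simp add: sum_subtractf sum_distrib_left[symmetric])
    finally have "(\<Sum>k\<le>n. real (n - k) * P k) = real n - real n * p" .
    moreover have "q = 1 - p" using pq by simp
    ultimately show ?thesis by (simp add: right_diff_distrib)
  qed
  have eq: "log 2 (real (n choose k)) = log 2 (P k) - real k * log 2 p - real (n - k) * log 2 q" if k: "k \<le> n" for k
  proof -
    have "real (n choose k) > 0" using k by simp
    then have "log 2 (P k) = log 2 (real (n choose k)) + real k * log 2 p + real (n - k) * log 2 q"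
      unfolding P_def using p q by (simp add: log_mult log_nat_power)
    thus ?thesis by simp
  qed
  have "(\<Sum>k\<le>n. P k * log 2 (real (n choose k))) =
        (\<Sum>k\<le>n. P k * log 2 (P k)) - log 2 p * (\<Sum>k\<le>n. real k * P k) - log 2 q * (\<Sum>k\<le>n. real (n - k) * P k)"
  proof -
    have "(\<Sum>k\<le>n. P k * log 2 (real (n choose k))) =
          (\<Sum>k\<le>n. P k * log 2 (P k) - log 2 p * (real k * P k) - log 2 q * (real (n - k) * P k))"
      by (intro sum.cong refl) (simp add: eq algebra_simps)
    thus ?thesis by (simp add: sum_subtractf sum_distrib_left)
  qed
  also have "\<dots> = (\<Sum>k\<le>n. P k * log 2 (P k)) + real n * (-(p * log 2 p + q * log 2 q))"
    using sk snk by (simp add: algebra_simps)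
  also have "(\<Sum>k\<le>n. P k * log 2 (P k)) = (\<Sum>k\<le>n. P k * ln (P k)) / ln 2"
    by (simp add: log_def sum_divide_distrib)
  finally have A: "(\<Sum>k\<le>n. P k * log 2 (real (n choose k))) = (\<Sum>k\<le>n. P k * ln (P k)) / ln 2 + real n * (-(p * log 2 p + q * log 2 q))" .
  have "(\<Sum>k\<le>n. P k * ln (P k)) / ln 2 \<ge> - ln (real n + 1) / ln 2"
    using divide_right_mono[OF entropy_bound[OF Ppos s1], of "ln 2"] by simp
  then have "(\<Sum>k\<le>n. P k * log 2 (real (n choose k))) \<ge> - ln (real n + 1) / ln 2 + real n * (-(p * log 2 p + q * log 2 q))"
    unfolding A by linarith
  thus ?thesis by (simp add: P_def log_def)
qed


lemma analytic:
  fixes p q \<epsilon> :: real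
  assumes p: "p > 0" and q: "q > 0" and pq: "p + q = 1" and eps: "\<epsilon> > 0"
  shows "\<exists>n0::nat. \<forall>n\<ge>n0. \<exists>a::nat\<Rightarrow>nat.
     (\<Sum>k\<le>n. p ^ k * q ^ (n - k) * real (a k) * real ((n choose k) div 2 ^ a k * 2 ^ a k))
       \<ge> real n * (-(p * log 2 p + q * log 2 q) - \<epsilon>)"
proof -
  define H where "H = -(p * log 2 p + q * log 2 q)"
  have p1: "p \<le> 1" and q1: "q \<le> 1" using p q pq by linarith+
  have lp: "log 2 p \<le> 0" using p p1 by simp
  have lq: "log 2 q \<le> 0" using q q1 by simp
  have H0: "H \<ge> 0" unfolding H_def using mult_nonneg_nonpos[OF less_imp_le[OF p] lp] mult_nonneg_nonpos[OF less_imp_le[OF q] lq] by linarith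
  obtain t :: nat where t: "2 * (H + 1) / \<epsilon> < 2 ^ t" using real_arch_pow[of 2] by auto
  define \<delta> :: real where "\<delta> = 1 / 2 ^ t"
  have \<delta>0: "\<delta> > 0" and \<delta>1: "\<delta> \<le> 1" by (simp_all add: \<delta>_def)
  have "2 * (H + 1) < \<epsilon> * 2 ^ t" using t eps by (simp add: field_simps)
  then have "\<delta> * (H + 1) < \<epsilon> / 2" by (simp add: \<delta>_def field_simps)
  then have \<delta>H: "\<delta> * H \<le> \<epsilon> / 2" using \<delta>0 by (simp add: algebra_simps)
  have lim: "((\<lambda>n::nat. (log 2 (real n + 1) + (real t + 1)) / real n) \<longlongrightarrow> 0) at_top"
    by real_asymp
  have "\<forall>\<^sub>F n in sequentially. (log 2 (real n + 1) + (real t + 1)) / real n < \<epsilon> / 2"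
    using order_tendstoD(2)[OF lim, of "\<epsilon> / 2"] eps by (simp only: half_gt_zero)
  moreover have "\<forall>\<^sub>F n in sequentially. n > (0::nat)" by (simp add: eventually_gt_at_top)
  ultimately have "\<forall>\<^sub>F n in sequentially. log 2 (real n + 1) + real t + 1 \<le> real n * (\<epsilon> / 2)"
  proof eventually_elim
    case (elim n)
    then show ?case by (simp add: field_simps)
  qed
  then obtain n0 where n0: "\<And>n. n \<ge> n0 \<Longrightarrow> log 2 (real n + 1) + real t + 1 \<le> real n * (\<epsilon> / 2)"
    by (auto simp: eventually_sequentially)
  show ?thesis
  proof (rule exI[of _ n0], intro allI impI)
    fix n assume "n0 \<le> n"
    then have big: "log 2 (real n + 1) + real t + 1 \<le> real n * (\<epsilon> / 2)" using n0 by blast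
    define P where "P k = real (n choose k) * p ^ k * q ^ (n - k)" for k
    have "\<forall>k. \<exists>b. k \<le> n \<longrightarrow> 2 ^ b \<le> (n choose k) \<and> (n choose k) < 2 ^ Suc b"
    proof
      fix k
      show "\<exists>b. k \<le> n \<longrightarrow> 2 ^ b \<le> (n choose k) \<and> (n choose k) < 2 ^ Suc b"
      proof (cases "k \<le> n")
        case True
        then have "n choose k \<ge> 1" by (simp add: Suc_leI)
        then obtain b where "2 ^ b \<le> (n choose k) \<and> (n choose k) < 2 ^ (b + 1)"
          using ex_power_ivl1[of 2 "n choose k"] by auto
        thus ?thesis by auto
      qed simp
    qed
    then obtain b where b: "\<And>k. k \<le> n \<Longrightarrow> 2 ^ b k \<le> (n choose k) \<and> (n choose k) < 2 ^ Suc (b k)"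
      by metis
    define a where "a k = b k - t" for k
    have "(\<Sum>k\<le>n. p ^ k * q ^ (n - k) * real (a k) * real ((n choose k) div 2 ^ a k * 2 ^ a k))
          \<ge> (\<Sum>k\<le>n. p ^ k * q ^ (n - k) * (real (n choose k) * (1 - \<delta>) * (log 2 (real (n choose k)) - real t - 1)))"
    proof (intro sum_mono)
      fix k assume "k \<in> {..n}"
      then have k: "k \<le> n" by simp
      have "real ((b k - t) * ((n choose k) div 2 ^ (b k - t) * 2 ^ (b k - t))) \<ge>
            real (n choose k) * (1 - 1 / 2 ^ t) * (log 2 (real (n choose k)) - real t - 1)"
        using b[OF k] by (intro perk) auto
      moreover have "p ^ k * q ^ (n - k) \<ge> 0" using p q by simp
      ultimately have M: "p ^ k * q ^ (n - k) * (real (n choose k) * (1 - 1 / 2 ^ t) * (log 2 (real (n choose k)) - real t - 1))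
          \<le> p ^ k * q ^ (n - k) * real ((b k - t) * ((n choose k) div 2 ^ (b k - t) * 2 ^ (b k - t)))"
        by (rule mult_left_mono)
      show "p ^ k * q ^ (n - k) * (real (n choose k) * (1 - \<delta>) * (log 2 (real (n choose k)) - real t - 1))
            \<le> p ^ k * q ^ (n - k) * real (a k) * real ((n choose k) div 2 ^ a k * 2 ^ a k)"
        unfolding a_def \<delta>_def using M by (simp add: mult.assoc)
    qed
    also have "(\<Sum>k\<le>n. p ^ k * q ^ (n - k) * (real (n choose k) * (1 - \<delta>) * (log 2 (real (n choose k)) - real t - 1)))
        = (1 - \<delta>) * ((\<Sum>k\<le>n. P k * log 2 (real (n choose k))) - (real t + 1) * (\<Sum>k\<le>n. P k))"
    proof -
      have "(\<Sum>k\<le>n. p ^ k * q ^ (n - k) * (real (n choose k) * (1 - \<delta>) * (log 2 (real (n choose k)) - real t - 1)))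
          = (\<Sum>k\<le>n. (1 - \<delta>) * (P k * log 2 (real (n choose k)) - (real t + 1) * P k))"
        by (intro sum.cong refl) (simp add: P_def algebra_simps)
      also have "\<dots> = (1 - \<delta>) * ((\<Sum>k\<le>n. P k * log 2 (real (n choose k))) - (real t + 1) * (\<Sum>k\<le>n. P k))"
        by (simp add: sum_distrib_left[symmetric] sum_subtractf)
      finally show ?thesis .
    qed
    also have "(\<Sum>k\<le>n. P k) = 1" using binom_sum1[OF pq] by (simp add: P_def)
    finally have S: "(\<Sum>k\<le>n. p ^ k * q ^ (n - k) * real (a k) * real ((n choose k) div 2 ^ a k * 2 ^ a k))
          \<ge> (1 - \<delta>) * ((\<Sum>k\<le>n. P k * log 2 (real (n choose k))) - (real t + 1))" by simp
    have "(\<Sum>k\<le>n. P k * log 2 (real (n choose k))) \<ge> real n * H - log 2 (real n + 1)"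
      using log_entropy_sum[OF p q pq, of n] by (simp add: P_def H_def)
    then have X: "(\<Sum>k\<le>n. P k * log 2 (real (n choose k))) - (real t + 1) \<ge> real n * (H - \<epsilon> / 2)"
      using big by (simp add: algebra_simps)
    have "(1 - \<delta>) * ((\<Sum>k\<le>n. P k * log 2 (real (n choose k))) - (real t + 1)) \<ge> (1 - \<delta>) * (real n * (H - \<epsilon> / 2))"
      using X \<delta>1 by (intro mult_left_mono) auto
    moreover have "real n * (\<delta> * H) \<le> real n * (\<epsilon> / 2)" using \<delta>H by (intro mult_left_mono) auto
    moreover have "real n * (\<delta> * \<epsilon>) \<ge> 0" using \<delta>0 eps by simp
    moreover have "(1 - \<delta>) * (real n * (H - \<epsilon> / 2)) = real n * H - real n * \<epsilon> / 2 - real n * (\<delta> * H) + real n * (\<delta> * \<epsilon>) / 2"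
      by (simp add: field_simps)
    ultimately have "(1 - \<delta>) * ((\<Sum>k\<le>n. P k * log 2 (real (n choose k))) - (real t + 1)) \<ge> real n * H - real n * \<epsilon>"
      by linarith
    moreover have "real n * (H - \<epsilon>) = real n * H - real n * \<epsilon>" by (simp add: algebra_simps)
    ultimately have "(1 - \<delta>) * ((\<Sum>k\<le>n. P k * log 2 (real (n choose k))) - (real t + 1)) \<ge> real n * (H - \<epsilon>)"
      by linarith
    then show "\<exists>a::nat\<Rightarrow>nat. (\<Sum>k\<le>n. p ^ k * q ^ (n - k) * real (a k) * real ((n choose k) div 2 ^ a k * 2 ^ a k))
       \<ge> real n * (-(p * log 2 p + q * log 2 q) - \<epsilon>)"
      using S unfolding H_def by (intro exI[of _ a]) linarith
  qed
qed


lemma sq_pow: "((x::real) ^ k)\<^sup>2 = (x\<^sup>2) ^ k"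
  by (metis power_mult mult.commute)
lemma cmod_prod_state:
  "(cmod (prod_state n \<alpha> \<beta> x))\<^sup>2 = ((cmod \<beta>)\<^sup>2) ^ pc n x * ((cmod \<alpha>)\<^sup>2) ^ (n - pc n x)"
proof -
  have "(cmod (prod_state n \<alpha> \<beta> x))\<^sup>2 = ((cmod \<beta>) ^ pc n x * (cmod \<alpha>) ^ (n - pc n x))\<^sup>2"
    by (simp add: prod_state_eq norm_mult norm_power)
  also have "\<dots> = ((cmod \<beta>)\<^sup>2) ^ pc n x * ((cmod \<alpha>)\<^sup>2) ^ (n - pc n x)"
    by (simp only: power_mult_distrib sq_pow)
  finally show ?thesis .
qed


lemma main_constr:
  fixes n :: nat and a :: "nat \<Rightarrow> nat" and \<alpha> \<beta> :: complex
  shows "\<exists>(m::nat) (K :: nat \<Rightarrow> nat \<Rightarrow> nat \<Rightarrow> complex) (r :: nat \<Rightarrow> nat).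
    incoherent_op (2 ^ n) m K \<and>
    (\<forall>j<m. sq_norm (2 ^ n) (op_apply (2 ^ n) (K j) (prod_state n \<alpha> \<beta>)) > 0 \<longrightarrow>
       r j \<le> n \<and>
       (\<exists>\<sigma>. \<sigma> permutes {..<2 ^ n} \<and>
          (\<forall>y<2 ^ n. op_apply (2 ^ n) (K j) (prod_state n \<alpha> \<beta>) (\<sigma> y)
                / complex_of_real (sqrt (sq_norm (2 ^ n) (op_apply (2 ^ n) (K j) (prod_state n \<alpha> \<beta>))))
             = maxcoh_padded (r j) y))) \<and>
    (\<Sum>j<m. sq_norm (2 ^ n) (op_apply (2 ^ n) (K j) (prod_state n \<alpha> \<beta>)) * real (r j))
       = (\<Sum>k\<le>n. ((cmod \<beta>)\<^sup>2) ^ k * ((cmod \<alpha>)\<^sup>2) ^ (n - k) * real (a k) * real ((n choose k) div 2 ^ a k * 2 ^ a k))"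
proof -
  obtain blk :: "nat \<Rightarrow> nat set" and \<rho> :: "nat \<Rightarrow> nat" where
    P1: "\<forall>x<2^n. x \<in> blk x \<and> blk x \<subseteq> {..<2^n} \<and> card (blk x) = 2 ^ \<rho> x \<and>
        (\<forall>y\<in>blk x. blk y = blk x \<and> pc n y = pc n x \<and> \<rho> y = \<rho> x)" and
    P2: "\<forall>g :: nat \<Rightarrow> real. (\<Sum>x<2^n. g (pc n x) * real (\<rho> x)) =
        (\<Sum>k\<le>n. g k * real (a k) * real ((n choose k) div 2 ^ a k * 2 ^ a k))"
    using blocks_exist[of n a] by (elim exE conjE) (rule that)
  note Q = P1[rule_format]
  have f1: "x \<in> blk x" if "x < 2^n" for x using Q[OF that] by (rule conjunct1)
  have f2: "blk x \<subseteq> {..<2^n}" if "x < 2^n" for x using Q[OF that] by (elim conjE)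
  have f3: "card (blk x) = 2 ^ \<rho> x" if "x < 2^n" for x using Q[OF that] by (elim conjE)
  have f4: "blk y = blk x" if "x < 2^n" "y \<in> blk x" for x y using Q[OF that(1)] that(2) by (elim conjE) (drule bspec, assumption, elim conjE)
  have f5: "pc n y = pc n x" if "x < 2^n" "y \<in> blk x" for x y using Q[OF that(1)] that(2) by (elim conjE) (drule bspec, assumption, elim conjE)
  have f6: "\<rho> y = \<rho> x" if "x < 2^n" "y \<in> blk x" for x y using Q[OF that(1)] that(2) by (elim conjE) (drule bspec, assumption, elim conjE)
  define v where "v = prod_state n \<alpha> \<beta>"
  have cv: "cmod (v y) = cmod (v x)" if "x < 2^n" "y \<in> blk x" for x y
  proof -
    have "pc n y = pc n x" using f5 that by simp
    then have "(cmod (v y))\<^sup>2 = (cmod (v x))\<^sup>2" unfolding v_def cmod_prod_state by simp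
    thus ?thesis by (simp add: power2_eq_iff_nonneg)
  qed
  have "\<exists>(m::nat) (K :: nat \<Rightarrow> nat \<Rightarrow> nat \<Rightarrow> complex) (r :: nat \<Rightarrow> nat).
    incoherent_op (2 ^ n) m K \<and>
    (\<forall>j<m. sq_norm (2 ^ n) (op_apply (2 ^ n) (K j) v) > 0 \<longrightarrow>
       r j \<le> n \<and>
       (\<exists>\<sigma>. \<sigma> permutes {..<2 ^ n} \<and>
          (\<forall>y<2 ^ n. op_apply (2 ^ n) (K j) v (\<sigma> y)
                / complex_of_real (sqrt (sq_norm (2 ^ n) (op_apply (2 ^ n) (K j) v)))
             = maxcoh_padded (r j) y))) \<and>
    (\<Sum>j<m. sq_norm (2 ^ n) (op_apply (2 ^ n) (K j) v) * real (r j)) = (\<Sum>a<2^n. (cmod (v a))\<^sup>2 * real (\<rho> a))"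
    by (rule abstract_construction[OF f1 f2 f4 cv f6 f3])
  moreover have "(\<Sum>x<2^n. (cmod (v x))\<^sup>2 * real (\<rho> x)) =
      (\<Sum>k\<le>n. ((cmod \<beta>)\<^sup>2) ^ k * ((cmod \<alpha>)\<^sup>2) ^ (n - k) * real (a k) * real ((n choose k) div 2 ^ a k * 2 ^ a k))"
    using P2[rule_format, of "\<lambda>k. ((cmod \<beta>)\<^sup>2) ^ k * ((cmod \<alpha>)\<^sup>2) ^ (n - k)"]
    unfolding v_def cmod_prod_state by (simp only:)
  ultimately show ?thesis unfolding v_def by (simp only:)
qed


theorem mainTheorem8:
  fixes \<alpha> \<beta> :: complex and \<epsilon> :: real
  assumes norm: "(cmod \<alpha>)\<^sup>2 + (cmod \<beta>)\<^sup>2 = 1"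
    and eps: "\<epsilon> > 0"
  shows "\<exists>n0::nat. \<forall>n\<ge>n0. \<exists>(m::nat) (K :: nat \<Rightarrow> nat \<Rightarrow> nat \<Rightarrow> complex) (r :: nat \<Rightarrow> nat).
    incoherent_op (2 ^ n) m K \<and>
    (\<forall>j<m. sq_norm (2 ^ n) (op_apply (2 ^ n) (K j) (prod_state n \<alpha> \<beta>)) > 0 \<longrightarrow>
       r j \<le> n \<and>
       (\<exists>\<sigma>. \<sigma> permutes {..<2 ^ n} \<and>
          (\<forall>y<2 ^ n. op_apply (2 ^ n) (K j) (prod_state n \<alpha> \<beta>) (\<sigma> y)
                / complex_of_real (sqrt (sq_norm (2 ^ n) (op_apply (2 ^ n) (K j) (prod_state n \<alpha> \<beta>))))
             = maxcoh_padded (r j) y))) \<and>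
    (\<Sum>j<m. sq_norm (2 ^ n) (op_apply (2 ^ n) (K j) (prod_state n \<alpha> \<beta>)) * real (r j))
       \<ge> real n * (R_I 2 (qubit_vec \<alpha> \<beta>) - \<epsilon>)"
proof -
  define p where "p = (cmod \<beta>)\<^sup>2"
  define q where "q = (cmod \<alpha>)\<^sup>2"
  have pq: "p + q = 1" using norm by (simp add: p_def q_def)
  have R: "R_I 2 (qubit_vec \<alpha> \<beta>) = - ((if \<alpha> = 0 then 0 else q * log 2 q) + (if \<beta> = 0 then 0 else p * log 2 p))"
    by (simp add: R_I_def qubit_vec_def numeral_2_eq_2 lessThan_Suc p_def q_def)
  show ?thesis
  proof (cases "\<alpha> = 0 \<or> \<beta> = 0")
    case True
    have R0: "R_I 2 (qubit_vec \<alpha> \<beta>) = 0"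
    proof (cases "\<alpha> = 0")
      case True
      then have "p = 1" using pq by (simp add: q_def)
      thus ?thesis using R True by simp
    next
      case False
      then have "\<beta> = 0" using \<open>\<alpha> = 0 \<or> \<beta> = 0\<close> by simp
      then have "q = 1" using pq by (simp add: p_def)
      thus ?thesis using R \<open>\<beta> = 0\<close> by simp
    qed
    show ?thesis
    proof (rule exI[of _ 0], intro allI impI)
      fix n :: nat
      obtain m K r where MK: "incoherent_op (2 ^ n) m K \<and>
        (\<forall>j<m. sq_norm (2 ^ n) (op_apply (2 ^ n) (K j) (prod_state n \<alpha> \<beta>)) > 0 \<longrightarrow>
           r j \<le> n \<and>
           (\<exists>\<sigma>. \<sigma> permutes {..<2 ^ n} \<and>
              (\<forall>y<2 ^ n. op_apply (2 ^ n) (K j) (prod_state n \<alpha> \<beta>) (\<sigma> y)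
                    / complex_of_real (sqrt (sq_norm (2 ^ n) (op_apply (2 ^ n) (K j) (prod_state n \<alpha> \<beta>))))
                 = maxcoh_padded (r j) y))) \<and>
        (\<Sum>j<m. sq_norm (2 ^ n) (op_apply (2 ^ n) (K j) (prod_state n \<alpha> \<beta>)) * real (r j))
           = (\<Sum>k\<le>n. ((cmod \<beta>)\<^sup>2) ^ k * ((cmod \<alpha>)\<^sup>2) ^ (n - k) * real ((\<lambda>_. 0::nat) k) * real ((n choose k) div 2 ^ (\<lambda>_. 0::nat) k * 2 ^ (\<lambda>_. 0::nat) k))"
        using main_constr[of n \<alpha> \<beta> "\<lambda>_. 0"] by (elim exE) (rule that)
      have "real n * (R_I 2 (qubit_vec \<alpha> \<beta>) - \<epsilon>) \<le> 0" using R0 eps by (simp add: mult_nonneg_nonpos)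
      also have "0 = (\<Sum>j<m. sq_norm (2 ^ n) (op_apply (2 ^ n) (K j) (prod_state n \<alpha> \<beta>)) * real (r j))"
        using MK by simp
      finally show "\<exists>(m::nat) (K :: nat \<Rightarrow> nat \<Rightarrow> nat \<Rightarrow> complex) (r :: nat \<Rightarrow> nat).
        incoherent_op (2 ^ n) m K \<and>
        (\<forall>j<m. sq_norm (2 ^ n) (op_apply (2 ^ n) (K j) (prod_state n \<alpha> \<beta>)) > 0 \<longrightarrow>
           r j \<le> n \<and>
           (\<exists>\<sigma>. \<sigma> permutes {..<2 ^ n} \<and>
              (\<forall>y<2 ^ n. op_apply (2 ^ n) (K j) (prod_state n \<alpha> \<beta>) (\<sigma> y)
                    / complex_of_real (sqrt (sq_norm (2 ^ n) (op_apply (2 ^ n) (K j) (prod_state n \<alpha> \<beta>))))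
                 = maxcoh_padded (r j) y))) \<and>
        (\<Sum>j<m. sq_norm (2 ^ n) (op_apply (2 ^ n) (K j) (prod_state n \<alpha> \<beta>)) * real (r j))
           \<ge> real n * (R_I 2 (qubit_vec \<alpha> \<beta>) - \<epsilon>)"
        using MK by blast
    qed
  next
    case False
    then have a0: "\<alpha> \<noteq> 0" and b0: "\<beta> \<noteq> 0" by auto
    have p0: "p > 0" using b0 by (simp add: p_def)
    have q0: "q > 0" using a0 by (simp add: q_def)
    have RR: "R_I 2 (qubit_vec \<alpha> \<beta>) = -(p * log 2 p + q * log 2 q)" using R a0 b0 by simp
    obtain n0 where n0: "\<And>n. n \<ge> n0 \<Longrightarrow> \<exists>a::nat\<Rightarrow>nat.
     (\<Sum>k\<le>n. p ^ k * q ^ (n - k) * real (a k) * real ((n choose k) div 2 ^ a k * 2 ^ a k))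
       \<ge> real n * (-(p * log 2 p + q * log 2 q) - \<epsilon>)"
      using analytic[OF p0 q0 pq eps] by blast
    show ?thesis
    proof (rule exI[of _ n0], intro allI impI)
      fix n :: nat assume "n0 \<le> n"
      then obtain a :: "nat \<Rightarrow> nat" where a: "(\<Sum>k\<le>n. p ^ k * q ^ (n - k) * real (a k) * real ((n choose k) div 2 ^ a k * 2 ^ a k))
       \<ge> real n * (-(p * log 2 p + q * log 2 q) - \<epsilon>)" using n0 by blast
      obtain m K r where MK: "incoherent_op (2 ^ n) m K \<and>
        (\<forall>j<m. sq_norm (2 ^ n) (op_apply (2 ^ n) (K j) (prod_state n \<alpha> \<beta>)) > 0 \<longrightarrow>
           r j \<le> n \<and>
           (\<exists>\<sigma>. \<sigma> permutes {..<2 ^ n} \<and>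
              (\<forall>y<2 ^ n. op_apply (2 ^ n) (K j) (prod_state n \<alpha> \<beta>) (\<sigma> y)
                    / complex_of_real (sqrt (sq_norm (2 ^ n) (op_apply (2 ^ n) (K j) (prod_state n \<alpha> \<beta>))))
                 = maxcoh_padded (r j) y))) \<and>
        (\<Sum>j<m. sq_norm (2 ^ n) (op_apply (2 ^ n) (K j) (prod_state n \<alpha> \<beta>)) * real (r j))
           = (\<Sum>k\<le>n. ((cmod \<beta>)\<^sup>2) ^ k * ((cmod \<alpha>)\<^sup>2) ^ (n - k) * real (a k) * real ((n choose k) div 2 ^ a k * 2 ^ a k))"
        using main_constr[of n \<alpha> \<beta> a] by (elim exE) (rule that)
      have "real n * (R_I 2 (qubit_vec \<alpha> \<beta>) - \<epsilon>) \<le>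
            (\<Sum>j<m. sq_norm (2 ^ n) (op_apply (2 ^ n) (K j) (prod_state n \<alpha> \<beta>)) * real (r j))"
        using a MK unfolding RR p_def q_def by simp
      then show "\<exists>(m::nat) (K :: nat \<Rightarrow> nat \<Rightarrow> nat \<Rightarrow> complex) (r :: nat \<Rightarrow> nat).
        incoherent_op (2 ^ n) m K \<and>
        (\<forall>j<m. sq_norm (2 ^ n) (op_apply (2 ^ n) (K j) (prod_state n \<alpha> \<beta>)) > 0 \<longrightarrow>
           r j \<le> n \<and>
           (\<exists>\<sigma>. \<sigma> permutes {..<2 ^ n} \<and>
              (\<forall>y<2 ^ n. op_apply (2 ^ n) (K j) (prod_state n \<alpha> \<beta>) (\<sigma> y)
                    / complex_of_real (sqrt (sq_norm (2 ^ n) (op_apply (2 ^ n) (K j) (prod_state n \<alpha> \<beta>))))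
                 = maxcoh_padded (r j) y))) \<and>
        (\<Sum>j<m. sq_norm (2 ^ n) (op_apply (2 ^ n) (K j) (prod_state n \<alpha> \<beta>)) * real (r j))
           \<ge> real n * (R_I 2 (qubit_vec \<alpha> \<beta>) - \<epsilon>)"
        using MK by blast
    qed
  qed
qed


end
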